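(* Let $\theta=\mathrm{cf}(\theta)$, $\kappa$ a cardinal, and $\sigma$ a regular cardinal with $\sigma>\kappa^+$ and $|\alpha|^\kappa<\sigma$ for all $\alpha<\sigma$. Let $D$ be a $\sigma$-complete filter on $\theta$ with $\theta\setminus\alpha\in D$ for all $\alpha<\theta$, and for each $\alpha<\theta$ let $\langle\beta^\alpha_\varepsilon:\varepsilon<\kappa\rangle$ be a sequence of ordinals. Then for every $X\subseteq\theta$ with $X\neq\emptyset$ mod $D$ there are a sequence of ordinals $\langle\beta^*_\varepsilon:\varepsilon<\kappa\rangle$ and $w\subseteq\kappa$ such that: (a) if $\varepsilon\in\kappa\setminus w$ then $\sigma\le\mathrm{cf}(\beta^*_\varepsilon)\le\theta$; (b) the set $B$ of $\alpha\in X$ such that $\beta^\alpha_\varepsilon=\beta^*_\varepsilon$ for all $\varepsilon\in w$, and $\sup\{\beta^*_\zeta:\zeta<\kappa,\beta^*_\zeta<\beta^*_\varepsilon\}<\beta^\alpha_\varepsilon<\beta^*_\varepsilon$ for all $\varepsilon\in\kappa\setminus w$, satisfies $B\neq\emptyset$ mod $D$; (c) if $\beta'_\varepsilon<\beta^*_\varepsilon$ for $\varepsilon\in\kappa\setminus w$, then $\{\alpha\in B:\beta'_\varepsilon<\beta^\alpha_\varepsilon$ for all $\varepsilon\in\kappa\setminus w\}\neq\emptyset$ mod $D$.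
   Context: For $Y\subseteq\theta$, "$Y\neq\emptyset$ mod $D$" means $\theta\setminus Y\notin D$. A filter is $\sigma$-complete if it is closed under intersections of fewer than $\sigma$ members. *)

theory Defs
  imports Main
begin

text \<open>Ordinals are represented as elements of an arbitrary well-ordered type 'o;
  the ordinal x is identified with the set of its predecessors.\<close>

definition below :: "'o::wellorder \<Rightarrow> 'o set" where
  "below x = {y. y < x}"

definition cofinal_in :: "'o::wellorder set \<Rightarrow> 'o \<Rightarrow> bool" where
  "cofinal_in A x \<longleftrightarrow> A \<subseteq> below x \<and> (\<forall>y<x. \<exists>a\<in>A. y \<le> a)"

definition cof :: "'o::wellorder \<Rightarrow> 'o" where
  "cof x = (LEAST y. \<exists>A. cofinal_in A x \<and> (card_of A, card_of (below y)) \<in> ordIso)"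

definition osup :: "'o::wellorder set \<Rightarrow> 'o" where
  "osup S = (LEAST y. \<forall>z\<in>S. z \<le> y)"

text \<open>Y is nonempty modulo the filter D on theta (= below t).\<close>
definition pos_mod :: "'o::wellorder set set \<Rightarrow> 'o \<Rightarrow> 'o set \<Rightarrow> bool" where
  "pos_mod D t Y \<longleftrightarrow> below t - Y \<notin> D"

definition complete_filter :: "'o::wellorder set set \<Rightarrow> 'o \<Rightarrow> 'o \<Rightarrow> bool" where
  "complete_filter D t s \<longleftrightarrow>
     (\<forall>A\<in>D. A \<subseteq> below t) \<and> below t \<in> D \<and> {} \<notin> D \<and>
     (\<forall>A B. A \<in> D \<longrightarrow> A \<subseteq> B \<longrightarrow> B \<subseteq> below t \<longrightarrow> B \<in> D) \<and>
     (\<forall>F. F \<subseteq> D \<longrightarrow> F \<noteq> {} \<longrightarrow> (card_of F, card_of (below s)) \<in> ordLess \<longrightarrow> \<Inter>F \<in> D)"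

definition is_cardinal :: "'o::wellorder \<Rightarrow> bool" where
  "is_cardinal k \<longleftrightarrow> (\<forall>y<k. (card_of (below y), card_of (below k)) \<in> ordLess)"

end

theory Submission
  imports Defs
begin

context includes cardinal_syntax begin

definition natrel :: "'o::wellorder rel" where "natrel = {(x,y). x \<le> y}"

lemma natrel_WO: "Well_order (natrel :: 'o::wellorder rel)"
proof -
  have F: "Field (natrel::'o rel) = UNIV" unfolding natrel_def Field_def by auto
  have "wf ((natrel::'o rel) - Id)"
  proof -
    have "(natrel::'o rel) - Id = {(x,y). x < y}" unfolding natrel_def by auto
    thus ?thesis using wf by simp
  qed
  moreover have "linear_order_on UNIV (natrel::'o rel)"
    unfolding linear_order_on_def partial_order_on_def preorder_on_def refl_on_def trans_on_def
      antisym_on_def total_on_def natrel_def by auto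
  ultimately show ?thesis unfolding well_order_on_def F by simp
qed

lemma Field_natrel_Restr: "Field (Restr (natrel::'o::wellorder rel) A) = A"
  unfolding natrel_def Field_def by auto

lemma underS_natrel: "a < t \<Longrightarrow> underS (Restr (natrel::'o::wellorder rel) (below t)) a = below a"
  unfolding underS_def natrel_def below_def by auto

lemma L_ot:
  fixes t :: "'o::wellorder"
  assumes "Y \<subseteq> below t"
  shows "\<exists>y\<le>t. |Y| =o |below y|"
proof -
  let ?R = "Restr (natrel::'o rel) (below t)"
  have WR: "Well_order ?R" using natrel_WO Well_order_Restr by blast
  have FR: "Field ?R = below t" by (rule Field_natrel_Restr)
  have "|below t| \<le>o ?R" using card_of_least WR FR by metis
  moreover have "|Y| \<le>o |below t|" using assms card_of_mono1 by blast
  ultimately have le: "|Y| \<le>o ?R" using ordLeq_transitive by blast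
  show ?thesis
  proof (cases "|Y| =o ?R")
    case True
    hence "|Field |Y|| =o |Field ?R|" using card_of_mono2 ordIso_iff_ordLeq ordIso_symmetric by metis
    hence "|Y| =o |below t|" using FR by (simp add: Field_card_of)
    thus ?thesis by blast
  next
    case False
    hence "|Y| <o ?R" using le ordLeq_iff_ordLess_or_ordIso by blast
    then obtain a where a: "a \<in> Field ?R" "|Y| =o Restr ?R (underS ?R a)"
      using ordLess_iff_ordIso_Restr[OF WR card_of_Well_order] by blast
    have at: "a < t" using a(1) FR below_def by auto
    have sub: "below a \<subseteq> below t" using at unfolding below_def by auto
    have "Restr ?R (underS ?R a) = Restr natrel (below a)"
      using Restr_subset[OF sub] underS_natrel[OF at] by simp
    hence "|Y| =o Restr natrel (below a)" using a(2) by simp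
    hence "|Field |Y|| =o |Field (Restr (natrel::'o rel) (below a))|"
      using card_of_mono2 ordIso_iff_ordLeq ordIso_symmetric by metis
    hence "|Y| =o |below a|" by (simp add: Field_card_of Field_natrel_Restr)
    thus ?thesis using at by (intro exI[of _ a]) auto
  qed
qed

end

context includes cardinal_syntax begin

lemma L_ot2:
  fixes t :: "'o::wellorder" and A :: "'a set"
  assumes "|A| \<le>o |below t|"
  shows "\<exists>y\<le>t. |A| =o |below y|"
proof -
  obtain f where f: "inj_on f A" "f ` A \<subseteq> below t" using assms unfolding card_of_ordLeq[symmetric] by blast
  obtain y where y: "y \<le> t" "|f ` A| =o |below y|" using L_ot[OF f(2)] by blast
  have "|A| =o |f ` A|" using f(1) card_of_ordIsoI inj_on_imp_bij_betw by blast
  thus ?thesis using y ordIso_transitive by blast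
qed

lemma TL:
  assumes C: "infinite C" and A: "|A| <o |C|" and B: "|B| <o |C|"
  shows "|A \<times> B| <o |C|"
proof (cases "finite (A \<times> B)")
  case True
  show ?thesis
    by (rule finite_ordLess_infinite[OF card_of_Well_order card_of_Well_order]) (simp_all add: Field_card_of C True)
next
  case F2: False
  hence ne: "A \<noteq> {}" "B \<noteq> {}" by auto
  have tot: "|A| \<le>o |B| \<or> |B| \<le>o |A|"
    by (rule ordLeq_total[OF card_of_Well_order card_of_Well_order])
  show ?thesis
  proof (cases "|A| \<le>o |B|")
    case 1: True
    have "infinite B"
    proof
      assume "finite B"
      hence "finite A" using card_of_ordLeq_finite[OF 1] by simp
      thus False using F2 \<open>finite B\<close> by simp
    qed
    hence "|B \<times> A| =o |B|" using card_of_Times_infinite[OF _ ne(1) 1] by simp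
    hence "|A \<times> B| =o |B|" by (rule ordIso_transitive[OF card_of_Times_commute])
    thus ?thesis by (rule ordIso_ordLess_trans[OF _ B])
  next
    case False
    hence 2: "|B| \<le>o |A|" using tot by simp
    have "infinite A"
    proof
      assume "finite A"
      hence "finite B" using card_of_ordLeq_finite[OF 2] by simp
      thus False using F2 \<open>finite A\<close> by simp
    qed
    hence "|A \<times> B| =o |A|" using card_of_Times_infinite[OF _ ne(2) 2] by simp
    thus ?thesis by (rule ordIso_ordLess_trans[OF _ A])
  qed
qed

lemma below_mono_card: "(y::'o::wellorder) \<le> x \<Longrightarrow> |below y| \<le>o |below x|"
  by (rule card_of_mono1) (auto simp: below_def)

lemma cof_wit: "\<exists>A. cofinal_in A (c::'o::wellorder) \<and> |A| =o |below (cof c)|"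
proof -
  have "\<exists>A. cofinal_in A c \<and> |A| =o |below c|"
    by (rule exI[of _ "below c"]) (auto simp: cofinal_in_def below_def intro: card_of_refl)
  thus ?thesis unfolding cof_def
    by (rule LeastI[where P="\<lambda>y. \<exists>A. cofinal_in A c \<and> |A| =o |below y|"])
qed

lemma cof_le:
  assumes "cofinal_in A (c::'o::wellorder)" "|A| =o |below y|"
  shows "cof c \<le> y"
  unfolding cof_def using assms by (intro Least_le) blast

lemma cof_le_self: "cof (c::'o::wellorder) \<le> c"
  by (rule cof_le[of "below c"]) (auto simp: cofinal_in_def below_def intro: card_of_refl)

context
  fixes s :: "'o::wellorder"
  assumes sreg: "cof s = s"
begin

lemma SL: assumes "y < s" shows "|below y| <o |below s|"
proof (rule ccontr)
  assume H: "\<not> |below y| <o |below s|"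
  have "|below y| <o |below s| \<or> |below s| \<le>o |below y|"
    by (rule ordLess_or_ordLeq[OF card_of_Well_order card_of_Well_order])
  hence 1: "|below s| \<le>o |below y|" using H by simp
  have 2: "|below y| \<le>o |below s|" using below_mono_card[of y s] assms by simp
  have "|below s| =o |below y|" unfolding ordIso_iff_ordLeq using 1 2 by simp
  hence "cof s \<le> y" by (intro cof_le[of "below s"]) (auto simp: cofinal_in_def below_def)
  thus False using sreg assms by simp
qed

lemma SL_le: assumes "|below y| <o |below s|" shows "y < s"
proof (rule ccontr)
  assume "\<not> y < s" hence "s \<le> y" by simp
  hence "|below s| \<le>o |below y|" by (rule below_mono_card)
  thus False using not_ordLess_ordLeq[OF assms] by simp
qed

lemma CF:
  assumes T: "T \<subseteq> below s" and card: "|T| <o |below s|"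
  shows "\<exists>y<s. \<forall>a\<in>T. a < y"
proof (rule ccontr)
  assume H: "\<not> (\<exists>y<s. \<forall>a\<in>T. a < y)"
  have cof: "cofinal_in T s" unfolding cofinal_in_def
  proof (intro conjI T allI impI)
    fix y assume "y < s"
    then obtain a where "a \<in> T" "\<not> a < y" using H by blast
    thus "\<exists>a\<in>T. y \<le> a" by (auto simp: not_less)
  qed
  obtain y where y: "y \<le> s" "|T| =o |below y|" using L_ot[OF T] by blast
  have "y \<noteq> s" using y(2) not_ordLess_ordIso[OF card] by auto
  hence "y < s" using y(1) by simp
  moreover have "cof s \<le> y" using cof_le[OF cof y(2)] .
  ultimately show False using sreg by simp
qed

lemma SMALL:
  fixes A :: "'a set"
  assumes "|A| <o |below s|"
  shows "\<exists>a<s. |A| \<le>o |below a|"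
proof -
  obtain y where y: "y \<le> s" "|A| =o |below y|" using L_ot2[OF ordLess_imp_ordLeq[OF assms]] by blast
  have "y \<noteq> s" using y(2) not_ordLess_ordIso[OF assms] by auto
  moreover have "|A| \<le>o |below y|" using y(2) unfolding ordIso_iff_ordLeq by simp
  ultimately show ?thesis using y(1) by (intro exI[of _ y]) simp
qed

lemma RU:
  fixes I :: "'i set" and A :: "'i \<Rightarrow> 'a set"
  assumes inf: "infinite (below s)" and I: "|I| <o |below s|"
    and Ai: "\<forall>i\<in>I. |A i| <o |below s|"
  shows "|\<Union>i\<in>I. A i| <o |below s|"
proof -
  have "\<forall>i\<in>I. \<exists>a. a < s \<and> |A i| \<le>o |below a|" using Ai SMALL by blast
  hence "\<exists>a. \<forall>i\<in>I. a i < s \<and> |A i| \<le>o |below (a i)|" by (rule bchoice)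
  then obtain a where a: "\<forall>i\<in>I. a i < s \<and> |A i| \<le>o |below (a i)|" by blast
  have c1: "|a ` I| <o |below s|" using card_of_image[of a I] I by (rule ordLeq_ordLess_trans)
  have c2: "a ` I \<subseteq> below s" using a by (auto simp: below_def)
  obtain y where y: "y < s" "\<forall>i\<in>I. a i < y" using CF[OF c2 c1] by auto
  have "\<forall>i\<in>I. |A i| \<le>o |below y|"
  proof
    fix i assume i: "i \<in> I"
    have "|below (a i)| \<le>o |below y|" using y(2) i below_mono_card less_imp_le by blast
    thus "|A i| \<le>o |below y|" using a i ordLeq_transitive by blast
  qed
  hence "\<forall>i\<in>I. \<exists>f. inj_on f (A i) \<and> f ` A i \<subseteq> below y" by (simp add: card_of_ordLeq[symmetric])
  hence "\<exists>f. \<forall>i\<in>I. inj_on (f i) (A i) \<and> f i ` A i \<subseteq> below y" by (rule bchoice)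
  then obtain f where f: "\<forall>i\<in>I. inj_on (f i) (A i) \<and> f i ` A i \<subseteq> below y" by blast
  have 1: "|\<Union>i\<in>I. A i| \<le>o |SIGMA i:I. A i|" by (rule card_of_UNION_Sigma)
  have 2: "|SIGMA i:I. A i| \<le>o |I \<times> below y|"
  proof -
    have "inj_on (\<lambda>(i,x). (i, f i x)) (SIGMA i:I. A i)"
      using f unfolding inj_on_def by auto
    moreover have "(\<lambda>(i,x). (i, f i x)) ` (SIGMA i:I. A i) \<subseteq> I \<times> below y" using f by auto
    ultimately show ?thesis unfolding card_of_ordLeq[symmetric] by blast
  qed
  have 3: "|I \<times> below y| <o |below s|" using TL[OF inf I SL[OF y(1)]] .
  show ?thesis by (rule ordLeq_ordLess_trans[OF ordLeq_transitive[OF 1 2] 3])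
qed

lemma osup_lt:
  fixes c :: 'o
  assumes sc: "s \<le> cof c" and T: "T \<subseteq> below c" and card: "|T| <o |below s|"
  shows "osup T < c"
proof -
  have "\<not> cofinal_in T c"
  proof
    assume cof: "cofinal_in T c"
    have "|T| \<le>o |below c|" using T by (rule card_of_mono1)
    then obtain y where y: "y \<le> c" "|T| =o |below y|" using L_ot2 by blast
    have "cof c \<le> y" using cof_le[OF cof y(2)] .
    hence "s \<le> y" using sc by simp
    hence "|below s| \<le>o |below y|" by (rule below_mono_card)
    hence "|below s| \<le>o |T|" by (rule ordLeq_ordIso_trans[OF _ ordIso_symmetric[OF y(2)]])
    thus False using not_ordLess_ordLeq[OF card] by simp
  qed
  then obtain y where y: "y < c" "\<forall>a\<in>T. a < y"
    using T unfolding cofinal_in_def by (auto simp: not_le)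
  have "osup T \<le> y" unfolding osup_def using y(2) by (intro Least_le) (auto simp: less_imp_le)
  thus ?thesis using y(1) by simp
qed

end
end

locale cl6 =
  fixes t k s :: "'o::wellorder"
    and D :: "'o set set"
    and beta :: "'o \<Rightarrow> 'o \<Rightarrow> 'o"
    and X :: "'o set"
  assumes theta_reg: "cof t = t"
    and kappa_card: "is_cardinal k"
    and sigma_reg: "cof s = s"
    and sigma_gt: "(cardSuc (card_of (below k)), card_of (below s)) \<in> ordLess"
    and sigma_pow: "\<forall>a<s. (BNF_Cardinal_Arithmetic.cexp (card_of (below a)) (card_of (below k)), card_of (below s)) \<in> ordLess"
    and D_filter: "complete_filter D t s"
    and D_tails: "\<forall>a<t. below t - below a \<in> D"
    and beta_bounded: "\<exists>b. \<forall>a<t. \<forall>e<k. beta a e < b"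
    and X_sub: "X \<subseteq> below t"
    and X_pos: "pos_mod D t X"

context cl6 begin
unbundle cardinal_syntax

lemma D_all: "(\<forall>A\<in>D. A \<subseteq> below t) \<and> below t \<in> D \<and> {} \<notin> D \<and>
     (\<forall>A B. A \<in> D \<longrightarrow> A \<subseteq> B \<longrightarrow> B \<subseteq> below t \<longrightarrow> B \<in> D) \<and>
     (\<forall>F. F \<subseteq> D \<longrightarrow> F \<noteq> {} \<longrightarrow> (card_of F, card_of (below s)) \<in> ordLess \<longrightarrow> \<Inter>F \<in> D)"
  using D_filter unfolding complete_filter_def .

lemma D_top: "below t \<in> D" by (rule D_all[THEN conjunct2, THEN conjunct1])

lemma D_complete:
  assumes "F \<subseteq> D" "F \<noteq> {}" "|F| <o |below s|" shows "\<Inter>F \<in> D"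
proof -
  have h: "\<forall>F. F \<subseteq> D \<longrightarrow> F \<noteq> {} \<longrightarrow> (card_of F, card_of (below s)) \<in> ordLess \<longrightarrow> \<Inter>F \<in> D"
    by (rule D_all[THEN conjunct2, THEN conjunct2, THEN conjunct2, THEN conjunct2])
  show ?thesis using h assms by blast
qed

lemma D_up:
  assumes "A \<in> D" "A \<subseteq> B" "B \<subseteq> below t" shows "B \<in> D"
proof -
  have h: "\<forall>A B. A \<in> D \<longrightarrow> A \<subseteq> B \<longrightarrow> B \<subseteq> below t \<longrightarrow> B \<in> D"
    by (rule D_all[THEN conjunct2, THEN conjunct2, THEN conjunct2, THEN conjunct1])
  show ?thesis using h assms by blast
qed

lemma pos_mono:
  assumes AB: "A \<subseteq> B" and pA: "pos_mod D t A" shows "pos_mod D t B"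
  unfolding pos_mod_def
proof
  assume "below t - B \<in> D"
  moreover have "below t - B \<subseteq> below t - A" using AB by auto
  ultimately have "below t - A \<in> D" using D_up by blast
  thus False using pA unfolding pos_mod_def by simp
qed

lemma pos_nonempty: "pos_mod D t Y \<Longrightarrow> \<exists>a\<in>Y. a < t"
proof (rule ccontr)
  assume "pos_mod D t Y" "\<not> (\<exists>a\<in>Y. a < t)"
  hence "below t - Y = below t" by (auto simp: below_def)
  thus False using \<open>pos_mod D t Y\<close> D_top unfolding pos_mod_def by simp
qed

lemma pos_Int_below: "pos_mod D t Y \<Longrightarrow> pos_mod D t (Y \<inter> below t)"
proof -
  have "below t - (Y \<inter> below t) = below t - Y" by auto
  thus "pos_mod D t Y \<Longrightarrow> pos_mod D t (Y \<inter> below t)" unfolding pos_mod_def by simp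
qed

lemma NU:
  fixes I :: "'i set"
  assumes I: "|I| <o |below s|" and N: "\<forall>i\<in>I. \<not> pos_mod D t (A i)"
  shows "\<not> pos_mod D t (\<Union>i\<in>I. A i)"
proof (cases "I = {}")
  case True
  thus ?thesis using D_top unfolding pos_mod_def by simp
next
  case False
  let ?F = "(\<lambda>i. below t - A i) ` I"
  have FD: "?F \<subseteq> D" using N unfolding pos_mod_def by auto
  have "|?F| <o |below s|" using card_of_image I ordLeq_ordLess_trans by blast
  moreover have "?F \<noteq> {}" using False by simp
  ultimately have "\<Inter>?F \<in> D" using FD D_complete by blast
  moreover have "\<Inter>?F = below t - (\<Union>i\<in>I. A i)" using False by auto
  ultimately show ?thesis unfolding pos_mod_def by simp
qed

lemma kls: "|below k| <o |below s|"
  by (rule ordLess_transitive[OF cardSuc_greater[OF card_of_Card_order] sigma_gt])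

lemma s_inf: "infinite (below s)"
proof
  assume fin: "finite (below s)"
  have ne: "below s \<noteq> {}"
  proof
    assume "below s = {}"
    hence "|below s| \<le>o |below k|" using card_of_empty by simp
    thus False using not_ordLess_ordLeq[OF kls] by simp
  qed
  define m where "m = Max (below s)"
  have m: "m < s" "\<forall>y<s. y \<le> m" using Max_in[OF fin ne] Max_ge[OF fin] unfolding m_def below_def by auto
  define z where "z = (LEAST x::'o. True)"
  have z: "\<forall>x. z \<le> x" unfolding z_def by (simp add: Least_le)
  show False
  proof (cases "m = z")
    case True
    hence bs: "below s = {z}" using m z unfolding below_def by (auto intro: order.antisym)
    define C where "C = Field (cardSuc (card_of (below k)))"
    have C1: "|C| <o |below s|"
      unfolding C_def
      by (rule ordIso_ordLess_trans[OF card_of_Field_ordIso[OF cardSuc_Card_order[OF card_of_Card_order]] sigma_gt])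
    have C2: "|below k| <o |C|"
      unfolding C_def
      by (rule ordLess_ordIso_trans[OF cardSuc_greater[OF card_of_Card_order]
        ordIso_symmetric[OF card_of_Field_ordIso[OF cardSuc_Card_order[OF card_of_Card_order]]]])
    have "C = {}"
    proof (rule ccontr)
      assume "C \<noteq> {}"
      hence "|{z}| \<le>o |C|" by (rule card_of_singl_ordLeq)
      hence "|below s| \<le>o |C|" using bs by simp
      thus False using not_ordLess_ordLeq[OF C1] by simp
    qed
    hence "|C| \<le>o |below k|" using card_of_empty by simp
    thus False using not_ordLess_ordLeq[OF C2] by simp
  next
    case False
    hence zm: "z < m" using z by (simp add: order.not_eq_order_implies_strict)
    define y where "y = (LEAST x. z < x)"
    have y: "z < y" "y \<le> m" unfolding y_def using zm by (auto intro: LeastI Least_le)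
    have by1: "below y = {z}"
    proof
      show "below y \<subseteq> {z}"
      proof
        fix x assume "x \<in> below y"
        hence "x < y" by (simp add: below_def)
        hence "\<not> z < x" unfolding y_def using not_less_Least by blast
        moreover have "z \<le> x" using z by blast
        ultimately show "x \<in> {z}" by (simp add: order_le_less)
      qed
    qed (use y in \<open>auto simp: below_def\<close>)
    have "cofinal_in {m} s" using m unfolding cofinal_in_def below_def by auto
    moreover have "|{m}| =o |below y|" unfolding by1
      by (rule card_of_ordIsoI[of "\<lambda>_. z"]) (simp add: bij_betw_def)
    ultimately have "cof s \<le> y" by (rule cof_le)
    thus False using sigma_reg y m by simp
  qed
qed

lemma bool_lt: "|UNIV :: bool set| <o |below s|"
  by (rule finite_ordLess_infinite[OF card_of_Well_order card_of_Well_order]) (simp_all add: Field_card_of s_inf)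

lemma pos_diff:
  assumes Y: "pos_mod D t Y" and N: "\<not> pos_mod D t N"
  shows "pos_mod D t (Y - N)"
proof (rule ccontr)
  assume H: "\<not> pos_mod D t (Y - N)"
  let ?A = "\<lambda>b::bool. if b then Y - N else N"
  have "\<forall>b\<in>UNIV. \<not> pos_mod D t (?A b)" using H N by simp
  hence "\<not> pos_mod D t (\<Union>b\<in>UNIV. ?A b)" by (rule NU[OF bool_lt])
  moreover have "Y \<subseteq> (\<Union>b\<in>UNIV. ?A b)" by auto
  ultimately show False using pos_mono[OF _ Y] by blast
qed

end


definition GOOD :: "'o::wellorder \<Rightarrow> 'o \<Rightarrow> 'o \<Rightarrow> 'o set set \<Rightarrow> ('o \<Rightarrow> 'o \<Rightarrow> 'o) \<Rightarrow> 'o set \<Rightarrow> ('o \<Rightarrow> 'o) \<Rightarrow> 'o set \<Rightarrow> bool" where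
  "GOOD t k s D beta X bs w \<longleftrightarrow> w \<subseteq> below k \<and>
           (\<forall>e\<in>below k - w. s \<le> cof (bs e) \<and> cof (bs e) \<le> t) \<and>
           (let B = {a\<in>X. (\<forall>e\<in>w. beta a e = bs e) \<and>
                       (\<forall>e\<in>below k - w.
                          osup {bs z | z. z < k \<and> bs z < bs e} < beta a e \<and> beta a e < bs e)}
            in pos_mod D t B \<and>
               (\<forall>b' :: 'o \<Rightarrow> 'o. (\<forall>e\<in>below k - w. b' e < bs e) \<longrightarrow>
                  pos_mod D t {a\<in>B. \<forall>e\<in>below k - w. b' e < beta a e}))"

context cl6 begin
unbundle cardinal_syntax

lemma kls_sub: "|below k - w| <o |below s|"
  by (rule ordLeq_ordLess_trans[OF card_of_mono1[OF Diff_subset] kls])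

lemma VERIFY3:
  assumes Y: "Y \<subseteq> X" "pos_mod D t Y" and w: "w \<subseteq> below k"
    and h1: "\<forall>a\<in>Y. \<forall>e\<in>w. beta a e = bs e"
    and h2: "\<forall>a\<in>Y. \<forall>e\<in>below k - w. beta a e < bs e"
    and h3: "\<forall>e\<in>below k - w. \<forall>g<bs e. \<not> pos_mod D t {a\<in>Y. beta a e \<le> g}"
  shows "GOOD t k s D beta X bs w"
proof -
  have cofs: "\<forall>e\<in>below k - w. s \<le> cof (bs e) \<and> cof (bs e) \<le> t"
  proof
    fix e assume e: "e \<in> below k - w"
    show "s \<le> cof (bs e) \<and> cof (bs e) \<le> t"
    proof
      show "s \<le> cof (bs e)"
      proof (rule ccontr)
        assume "\<not> s \<le> cof (bs e)" hence lt: "cof (bs e) < s" by simp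
        obtain A where A: "cofinal_in A (bs e)" "|A| =o |below (cof (bs e))|" using cof_wit by blast
        have cA: "|A| <o |below s|" by (rule ordIso_ordLess_trans[OF A(2) SL[OF sigma_reg lt]])
        have "\<forall>a\<in>A. \<not> pos_mod D t {x\<in>Y. beta x e \<le> a}"
        proof
          fix a assume "a \<in> A"
          hence "a < bs e" using A(1) unfolding cofinal_in_def below_def by auto
          thus "\<not> pos_mod D t {x\<in>Y. beta x e \<le> a}" using h3 e by blast
        qed
        hence N: "\<not> pos_mod D t (\<Union>a\<in>A. {x\<in>Y. beta x e \<le> a})" by (rule NU[OF cA])
        have "Y \<subseteq> (\<Union>a\<in>A. {x\<in>Y. beta x e \<le> a})"
        proof
          fix x assume x: "x \<in> Y"
          hence "beta x e < bs e" using h2 e by blast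
          then obtain a where "a \<in> A" "beta x e \<le> a" using A(1) unfolding cofinal_in_def by blast
          thus "x \<in> (\<Union>a\<in>A. {x\<in>Y. beta x e \<le> a})" using x by blast
        qed
        thus False using pos_mono[OF _ Y(2)] N by blast
      qed
    next
      let ?Y = "Y \<inter> below t"
      let ?A = "(\<lambda>x. beta x e) ` ?Y"
      have pY: "pos_mod D t ?Y" by (rule pos_Int_below[OF Y(2)])
      have cof: "cofinal_in ?A (bs e)" unfolding cofinal_in_def
      proof (intro conjI allI impI)
        show "?A \<subseteq> below (bs e)" using h2 e by (auto simp: below_def)
      next
        fix y assume y: "y < bs e"
        show "\<exists>a\<in>?A. y \<le> a"
        proof (rule ccontr)
          assume "\<not> (\<exists>a\<in>?A. y \<le> a)"
          hence "?Y \<subseteq> {x\<in>Y. beta x e \<le> y}" by (auto simp: not_le less_imp_le)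
          hence "pos_mod D t {x\<in>Y. beta x e \<le> y}" using pos_mono pY by blast
          thus False using h3 e y by blast
        qed
      qed
      have "|?A| \<le>o |below t|"
        by (rule ordLeq_transitive[OF card_of_image card_of_mono1]) auto
      then obtain y0 where y0: "y0 \<le> t" "|?A| =o |below y0|" using L_ot2 by blast
      have "cof (bs e) \<le> y0" by (rule cof_le[OF cof y0(2)])
      thus "cof (bs e) \<le> t" using y0(1) by simp
    qed
  qed
  have Olt: "\<forall>e\<in>below k - w. osup {bs z | z. z < k \<and> bs z < bs e} < bs e"
  proof
    fix e assume e: "e \<in> below k - w"
    have T: "{bs z | z. z < k \<and> bs z < bs e} \<subseteq> below (bs e)" by (auto simp: below_def)
    have "{bs z | z. z < k \<and> bs z < bs e} \<subseteq> bs ` below k" by (auto simp: below_def)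
    hence "|{bs z | z. z < k \<and> bs z < bs e}| \<le>o |below k|"
      by (rule ordLeq_transitive[OF card_of_mono1 card_of_image])
    hence "|{bs z | z. z < k \<and> bs z < bs e}| <o |below s|" by (rule ordLeq_ordLess_trans[OF _ kls])
    thus "osup {bs z | z. z < k \<and> bs z < bs e} < bs e"
      using osup_lt[OF sigma_reg _ T] cofs e by blast
  qed
  let ?N = "\<Union>e\<in>below k - w. {x\<in>Y. beta x e \<le> osup {bs z | z. z < k \<and> bs z < bs e}}"
  have "\<forall>e\<in>below k - w. \<not> pos_mod D t {x\<in>Y. beta x e \<le> osup {bs z | z. z < k \<and> bs z < bs e}}"
    using h3 Olt by blast
  hence nN: "\<not> pos_mod D t ?N" by (rule NU[OF kls_sub])
  define B where "B = {a\<in>X. (\<forall>e\<in>w. beta a e = bs e) \<and>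
                       (\<forall>e\<in>below k - w.
                          osup {bs z | z. z < k \<and> bs z < bs e} < beta a e \<and> beta a e < bs e)}"
  have YN: "pos_mod D t (Y - ?N)" by (rule pos_diff[OF Y(2) nN])
  have sub: "Y - ?N \<subseteq> B"
  proof
    fix x assume x: "x \<in> Y - ?N"
    show "x \<in> B" unfolding B_def
    proof (intro CollectI conjI ballI)
      show "x \<in> X" using x Y(1) by blast
    next
      fix e assume "e \<in> w" thus "beta x e = bs e" using x h1 by blast
    next
      fix e assume e: "e \<in> below k - w"
      show "osup {bs z | z. z < k \<and> bs z < bs e} < beta x e" using x e by (auto simp: not_le)
      show "beta x e < bs e" using x e h2 by blast
    qed
  qed
  have pB: "pos_mod D t B" by (rule pos_mono[OF sub YN])
  have cc: "\<forall>b'. (\<forall>e\<in>below k - w. b' e < bs e) \<longrightarrow>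
                  pos_mod D t {a\<in>B. \<forall>e\<in>below k - w. b' e < beta a e}"
  proof (intro allI impI)
    fix b' assume b': "\<forall>e\<in>below k - w. b' e < bs e"
    let ?N' = "\<Union>e\<in>below k - w. {x\<in>Y. beta x e \<le> b' e}"
    have "\<forall>e\<in>below k - w. \<not> pos_mod D t {x\<in>Y. beta x e \<le> b' e}" using h3 b' by blast
    hence nN': "\<not> pos_mod D t ?N'" by (rule NU[OF kls_sub])
    have p: "pos_mod D t ((Y - ?N) - ?N')" by (rule pos_diff[OF YN nN'])
    have "(Y - ?N) - ?N' \<subseteq> {a\<in>B. \<forall>e\<in>below k - w. b' e < beta a e}"
      using sub by (auto simp: not_le)
    thus "pos_mod D t {a\<in>B. \<forall>e\<in>below k - w. b' e < beta a e}" using pos_mono p by blast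
  qed
  show ?thesis unfolding GOOD_def Let_def using w cofs pB cc unfolding B_def by blast
qed

end


context cl6 begin
unbundle cardinal_syntax

lemma FI:
  assumes "finite E"
  shows "E \<subseteq> below k \<Longrightarrow> pos_mod D t Y \<Longrightarrow> Y \<subseteq> below t \<Longrightarrow>
    \<exists>b. pos_mod D t (Y \<inter> {a. \<forall>e\<in>E. beta a e < b e}) \<and>
        (\<forall>e\<in>E. \<forall>g<b e. \<not> pos_mod D t (Y \<inter> {a. \<forall>e\<in>E. beta a e < b e} \<inter> {a. beta a e < g}))"
  using assms
proof (induction E arbitrary: Y rule: finite_induct)
  case empty
  thus ?case by simp
next
  case (insert e0 E)
  obtain bb where bb: "\<forall>a<t. \<forall>e<k. beta a e < bb" using beta_bounded by blast
  have e0k: "e0 < k" using insert.prems(1) by (auto simp: below_def)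
  let ?P = "\<lambda>g. pos_mod D t (Y \<inter> {a. beta a e0 < g})"
  have "Y \<inter> {a. beta a e0 < bb} = Y" using insert.prems(3) bb e0k by (auto simp: below_def)
  hence Pbb: "?P bb" using insert.prems(2) by simp
  define g where "g = (LEAST g. ?P g)"
  have Pg: "?P g" unfolding g_def using Pbb by (rule LeastI)
  have Pmin: "\<And>g'. g' < g \<Longrightarrow> \<not> ?P g'" unfolding g_def using not_less_Least by blast
  let ?Y = "Y \<inter> {a. beta a e0 < g}"
  obtain b where b: "pos_mod D t (?Y \<inter> {a. \<forall>e\<in>E. beta a e < b e})"
    "\<forall>e\<in>E. \<forall>g<b e. \<not> pos_mod D t (?Y \<inter> {a. \<forall>e\<in>E. beta a e < b e} \<inter> {a. beta a e < g})"
    using insert.IH[of ?Y] insert.prems Pg by auto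
  define b' where "b' = b(e0 := g)"
  have Zeq: "Y \<inter> {a. \<forall>e\<in>insert e0 E. beta a e < b' e} = ?Y \<inter> {a. \<forall>e\<in>E. beta a e < b e}"
    using insert.hyps(2) unfolding b'_def by auto
  show ?case
  proof (intro exI[of _ b'] conjI)
    show "pos_mod D t (Y \<inter> {a. \<forall>e\<in>insert e0 E. beta a e < b' e})" using Zeq b(1) by simp
  next
    show "\<forall>e\<in>insert e0 E. \<forall>g<b' e. \<not> pos_mod D t (Y \<inter> {a. \<forall>e\<in>insert e0 E. beta a e < b' e} \<inter> {a. beta a e < g})"
    proof (intro ballI allI impI)
      fix e g' assume e: "e \<in> insert e0 E" and g': "g' < b' e"
      show "\<not> pos_mod D t (Y \<inter> {a. \<forall>e\<in>insert e0 E. beta a e < b' e} \<inter> {a. beta a e < g'})"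
      proof (cases "e = e0")
        case True
        hence "g' < g" using g' unfolding b'_def by simp
        hence np: "\<not> ?P g'" by (rule Pmin)
        have "Y \<inter> {a. \<forall>e\<in>insert e0 E. beta a e < b' e} \<inter> {a. beta a e < g'} \<subseteq> Y \<inter> {a. beta a e0 < g'}"
          using True by auto
        thus ?thesis using np pos_mono by blast
      next
        case False
        hence eE: "e \<in> E" and be: "b' e = b e" using e unfolding b'_def by auto
        show ?thesis unfolding Zeq using b(2) eE g' be by auto
      qed
    qed
  qed
qed

lemma finite_case:
  assumes fin: "finite (below k)"
  shows "\<exists>bs w. GOOD t k s D beta X bs w"
proof -
  obtain b where b: "pos_mod D t (X \<inter> {a. \<forall>e\<in>below k. beta a e < b e})"
    "\<forall>e\<in>below k. \<forall>g<b e. \<not> pos_mod D t (X \<inter> {a. \<forall>e\<in>below k. beta a e < b e} \<inter> {a. beta a e < g})"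
    using FI[OF fin _ X_pos X_sub] by blast
  let ?YZ = "X \<inter> {a. \<forall>e\<in>below k. beta a e < b e}"
  define w where "w = {e\<in>below k. \<exists>g<b e. \<forall>x. g < x \<longrightarrow> b e \<le> x}"
  define bs where "bs e = (if e \<in> w then (SOME g. g < b e \<and> (\<forall>x. g < x \<longrightarrow> b e \<le> x)) else b e)" for e
  have bsw: "\<And>e. e \<in> w \<Longrightarrow> bs e < b e \<and> (\<forall>x. bs e < x \<longrightarrow> b e \<le> x)"
  proof -
    fix e assume e: "e \<in> w"
    hence "\<exists>g. g < b e \<and> (\<forall>x. g < x \<longrightarrow> b e \<le> x)" unfolding w_def by blast
    hence "(SOME g. g < b e \<and> (\<forall>x. g < x \<longrightarrow> b e \<le> x)) < b e \<and>
      (\<forall>x. (SOME g. g < b e \<and> (\<forall>x. g < x \<longrightarrow> b e \<le> x)) < x \<longrightarrow> b e \<le> x)" by (rule someI_ex)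
    thus "bs e < b e \<and> (\<forall>x. bs e < x \<longrightarrow> b e \<le> x)" unfolding bs_def using e by simp
  qed
  have wk: "w \<subseteq> below k" unfolding w_def by auto
  let ?NZ = "\<Union>e\<in>w. ?YZ \<inter> {a. beta a e < bs e}"
  have cw: "|w| <o |below s|" by (rule ordLeq_ordLess_trans[OF card_of_mono1[OF wk] kls])
  have "\<forall>e\<in>w. \<not> pos_mod D t (?YZ \<inter> {a. beta a e < bs e})" using b(2) bsw wk by blast
  hence nN0: "\<not> pos_mod D t ?NZ" by (rule NU[OF cw])
  let ?Y = "?YZ - ?NZ"
  have pY: "pos_mod D t ?Y" by (rule pos_diff[OF b(1) nN0])
  show ?thesis
  proof (intro exI)
    show "GOOD t k s D beta X bs w"
    proof (rule VERIFY3[OF _ pY wk])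
      show "?Y \<subseteq> X" by auto
    next
      show "\<forall>a\<in>?Y. \<forall>e\<in>w. beta a e = bs e"
      proof (intro ballI)
        fix a e assume a: "a \<in> ?Y" and e: "e \<in> w"
        have 1: "beta a e < b e" using a e wk by blast
        have 2: "\<not> beta a e < bs e" using a e by blast
        have 3: "\<not> bs e < beta a e" using bsw[OF e] 1 by (auto simp: not_le)
        show "beta a e = bs e" using 2 3 by simp
      qed
    next
      show "\<forall>a\<in>?Y. \<forall>e\<in>below k - w. beta a e < bs e"
        unfolding bs_def by auto
    next
      show "\<forall>e\<in>below k - w. \<forall>g<bs e. \<not> pos_mod D t {a\<in>?Y. beta a e \<le> g}"
      proof (intro ballI allI impI)
        fix e g assume e: "e \<in> below k - w" and g: "g < bs e"
        have bse: "bs e = b e" using e unfolding bs_def by simp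
        have "\<not> (\<forall>x. g < x \<longrightarrow> b e \<le> x)" using e g bse unfolding w_def by auto
        then obtain x where x: "g < x" "x < b e" by (auto simp: not_le)
        have np: "\<not> pos_mod D t (?YZ \<inter> {a. beta a e < x})" using b(2) e x(2) by blast
        have "{a\<in>?Y. beta a e \<le> g} \<subseteq> ?YZ \<inter> {a. beta a e < x}" using x(1) by auto
        thus "\<not> pos_mod D t {a\<in>?Y. beta a e \<le> g}" using np pos_mono by blast
      qed
    qed
  qed
qed

end


inductive Gs :: "'o::wellorder \<Rightarrow> 'o \<Rightarrow> (('o \<Rightarrow> 'o \<times> bool) \<Rightarrow> 'o set) \<Rightarrow> 'o \<Rightarrow> 'o \<Rightarrow> bool"
  for k bnd W where
  base: "Gs k bnd W i bnd"
| step: "j < i \<Longrightarrow> (\<forall>x\<in>below k. Gs k bnd W j (fst (e x))) \<Longrightarrow>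
         (\<forall>x. x \<notin> below k \<longrightarrow> e x = undefined) \<Longrightarrow> y \<in> W e \<Longrightarrow> Gs k bnd W i y"

lemma Gs_mono: "Gs k bnd W i x \<Longrightarrow> i \<le> i' \<Longrightarrow> Gs k bnd W i' x"
proof (induction rule: Gs.cases)
  case (base i) thus ?case by (simp add: Gs.base)
next
  case (step j i e y)
  thus ?case using Gs.step[of j i' k bnd W e y] by simp
qed

lemma Gs_Func: "e \<in> Func (below k) ({x. Gs k bnd W j x} \<times> UNIV) \<longleftrightarrow>
   (\<forall>x\<in>below k. Gs k bnd W j (fst (e x))) \<and> (\<forall>x. x \<notin> below k \<longrightarrow> e x = undefined)"
  unfolding Func_def by (auto simp: mem_Times_iff)

lemma Gs_sub: "{x. Gs k bnd W i x} \<subseteq>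
  insert bnd (\<Union>j\<in>below i. \<Union>e\<in>Func (below k) ({x. Gs k bnd W j x} \<times> UNIV). W e)"
proof
  fix y assume "y \<in> {x. Gs k bnd W i x}"
  hence "Gs k bnd W i y" by simp
  thus "y \<in> insert bnd (\<Union>j\<in>below i. \<Union>e\<in>Func (below k) ({x. Gs k bnd W j x} \<times> UNIV). W e)"
  proof (cases rule: Gs.cases)
    case base thus ?thesis by simp
  next
    case (step j e)
    hence "e \<in> Func (below k) ({x. Gs k bnd W j x} \<times> UNIV)" unfolding Gs_Func by simp
    thus ?thesis using step by (auto simp: below_def)
  qed
qed

context cl6 begin
unbundle cardinal_syntax

lemma ins_lt: "|S| <o |below s| \<Longrightarrow> |insert x S| <o |below s|"
proof -
  assume S: "|S| <o |below s|"
  have "|{x}| <o |below s|"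
    by (rule finite_ordLess_infinite[OF card_of_Well_order card_of_Well_order]) (simp_all add: Field_card_of s_inf)
  hence "|{x} \<union> S| <o |below s|" by (rule card_of_Un_ordLess_infinite[OF s_inf _ S])
  thus ?thesis by simp
qed

lemma Func_lt:
  assumes G: "|G| <o |below s|"
  shows "|Func (below k) (G \<times> (UNIV::bool set))| <o |below s|"
proof -
  have "|G \<times> (UNIV::bool set)| <o |below s|" by (rule TL[OF s_inf G bool_lt])
  then obtain a where a: "a < s" "|G \<times> (UNIV::bool set)| \<le>o |below a|" using SMALL[OF sigma_reg] by blast
  have "|G \<times> (UNIV::bool set)| ^c |below k| \<le>o |below a| ^c |below k|"
    by (rule cexp_mono1[OF a(2) card_of_Card_order])
  hence "|G \<times> (UNIV::bool set)| ^c |below k| <o |below s|"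
    using sigma_pow a(1) ordLeq_ordLess_trans by blast
  thus ?thesis unfolding cexp_def Field_card_of .
qed

lemma Gs_card:
  assumes W: "\<forall>e. |W e| <o |below s|"
  shows "i < s \<Longrightarrow> |{x. Gs k bnd W i x}| <o |below s|"
proof (induction i rule: less_induct)
  case (less i)
  have "\<forall>j\<in>below i. |\<Union>e\<in>Func (below k) ({x. Gs k bnd W j x} \<times> UNIV). W e| <o |below s|"
  proof
    fix j assume "j \<in> below i"
    hence j: "j < i" by (simp add: below_def)
    hence "|{x. Gs k bnd W j x}| <o |below s|" using less by simp
    hence "|Func (below k) ({x. Gs k bnd W j x} \<times> (UNIV::bool set))| <o |below s|" by (rule Func_lt)
    thus "|\<Union>e\<in>Func (below k) ({x. Gs k bnd W j x} \<times> UNIV). W e| <o |below s|"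
      using RU[OF sigma_reg s_inf] W by blast
  qed
  hence "|\<Union>j\<in>below i. \<Union>e\<in>Func (below k) ({x. Gs k bnd W j x} \<times> UNIV). W e| <o |below s|"
    by (rule RU[OF sigma_reg s_inf SL[OF sigma_reg less.prems]])
  hence "|insert bnd (\<Union>j\<in>below i. \<Union>e\<in>Func (below k) ({x. Gs k bnd W j x} \<times> UNIV). W e)| <o |below s|"
    by (rule ins_lt)
  thus ?case by (rule ordLeq_ordLess_trans[OF card_of_mono1[OF Gs_sub]])
qed

lemma lam_exists:
  assumes kinf: "infinite (below k)"
  shows "\<exists>l<s. (\<exists>j. j < l) \<and> (\<forall>j<l. \<exists>j'. j < j' \<and> j' < l) \<and>
     (\<forall>A\<subseteq>below l. |A| \<le>o |below k| \<longrightarrow> (\<exists>j<l. \<forall>a\<in>A. a \<le> j))"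
proof -
  define C where "C = Field (cardSuc (card_of (below k)))"
  have C1: "|C| <o |below s|"
    unfolding C_def
    by (rule ordIso_ordLess_trans[OF card_of_Field_ordIso[OF cardSuc_Card_order[OF card_of_Card_order]] sigma_gt])
  have C2: "|below k| <o |C|"
    unfolding C_def
    by (rule ordLess_ordIso_trans[OF cardSuc_greater[OF card_of_Card_order]
        ordIso_symmetric[OF card_of_Field_ordIso[OF cardSuc_Card_order[OF card_of_Card_order]]]])
  obtain a where a: "a < s" "|C| \<le>o |below a|" using SMALL[OF sigma_reg C1] by blast
  have Pa: "|below k| <o |below a|" by (rule ordLess_ordLeq_trans[OF C2 a(2)])
  define l where "l = (LEAST x::'o. (card_of (below k), card_of (below x)) \<in> ordLess)"
  have Pl: "|below k| <o |below l|" unfolding l_def using Pa by (rule LeastI[where P="\<lambda>x. (card_of (below k), card_of (below x)) \<in> ordLess"])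
  have la: "l \<le> a" unfolding l_def using Pa by (rule Least_le[where P="\<lambda>x. (card_of (below k), card_of (below x)) \<in> ordLess"])
  have lmin: "\<And>y. y < l \<Longrightarrow> |below y| \<le>o |below k|"
  proof -
    fix y assume "y < l"
    hence "\<not> |below k| <o |below y|" unfolding l_def by (rule not_less_Least[where P="\<lambda>x. (card_of (below k), card_of (below x)) \<in> ordLess"])
    moreover have "|below k| <o |below y| \<or> |below y| \<le>o |below k|"
      by (rule ordLess_or_ordLeq[OF card_of_Well_order card_of_Well_order])
    ultimately show "|below y| \<le>o |below k|" by simp
  qed
  have linf: "infinite (below l)"
  proof
    assume "finite (below l)"
    hence "finite (below k)" using card_of_ordLeq_finite[OF ordLess_imp_ordLeq[OF Pl]] by simp
    thus False using kinf by simp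
  qed
  show ?thesis
  proof (rule exI[of _ l], intro conjI)
    show "l < s" using la a(1) by simp
  next
    show "\<exists>j. j < l"
    proof (rule ccontr)
      assume "\<not> (\<exists>j. j < l)"
      hence "below l = {}" by (auto simp: below_def)
      thus False using linf by simp
    qed
  next
    show "\<forall>j<l. \<exists>j'. j < j' \<and> j' < l"
    proof (intro allI impI)
    fix j assume j: "j < l"
    show "\<exists>j'. j < j' \<and> j' < l"
    proof (rule ccontr)
      assume H: "\<not> (\<exists>j'. j < j' \<and> j' < l)"
      have sub: "below l \<subseteq> {j} \<union> below j"
      proof
        fix x assume "x \<in> below l"
        hence "x < l" by (simp add: below_def)
        hence "\<not> j < x" using H by blast
        thus "x \<in> {j} \<union> below j" by (auto simp: below_def not_less order.order_iff_strict)
      qed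
      have 1: "|{j}| \<le>o |below k|"
        by (rule ordLess_imp_ordLeq[OF finite_ordLess_infinite[OF card_of_Well_order card_of_Well_order]])
           (simp_all add: Field_card_of kinf)
      have "|{j} \<union> below j| \<le>o |below k|"
        by (rule card_of_Un_ordLeq_infinite_Field[OF _ 1 lmin[OF j] card_of_Card_order]) (simp add: Field_card_of kinf)
      hence "|below l| \<le>o |below k|" by (rule ordLeq_transitive[OF card_of_mono1[OF sub]])
      thus False using not_ordLess_ordLeq[OF Pl] by simp
    qed
    qed
  next
    show "\<forall>A\<subseteq>below l. |A| \<le>o |below k| \<longrightarrow> (\<exists>j<l. \<forall>a\<in>A. a \<le> j)"
    proof (intro allI impI)
    fix A assume A: "A \<subseteq> below l" "|A| \<le>o |below k|"
    show "\<exists>j<l. \<forall>a\<in>A. a \<le> j"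
    proof (rule ccontr)
      assume H: "\<not> (\<exists>j<l. \<forall>a\<in>A. a \<le> j)"
      have sub: "below l \<subseteq> (\<Union>a\<in>A. below a)"
      proof
        fix j assume "j \<in> below l"
        hence "j < l" by (simp add: below_def)
        then obtain a where "a \<in> A" "\<not> a \<le> j" using H by blast
        thus "j \<in> (\<Union>a\<in>A. below a)" by (auto simp: below_def not_le)
      qed
      have "\<forall>a\<in>A. |below a| \<le>o |below k|" using A(1) lmin by (auto simp: below_def)
      hence "|\<Union>a\<in>A. below a| \<le>o |below k|" by (rule card_of_UNION_ordLeq_infinite[OF kinf A(2)])
      hence "|below l| \<le>o |below k|" by (rule ordLeq_transitive[OF card_of_mono1[OF sub]])
      thus False using not_ordLess_ordLeq[OF Pl] by simp
    qed
    qed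
  qed
qed

end


definition Bset :: "'o::wellorder set \<Rightarrow> ('o \<Rightarrow> 'o \<Rightarrow> 'o) \<Rightarrow> 'o \<Rightarrow> ('o \<Rightarrow> 'o) \<Rightarrow> 'o set \<Rightarrow> 'o set" where
  "Bset X beta k c w = {a\<in>X. (\<forall>e\<in>w. beta a e = c e) \<and>
     (\<forall>e\<in>below k - w. osup {c z | z. z < k \<and> c z < c e} < beta a e \<and> beta a e < c e)}"

definition BB :: "'o::wellorder set set \<Rightarrow> 'o \<Rightarrow> 'o set \<Rightarrow> ('o \<Rightarrow> 'o \<Rightarrow> 'o) \<Rightarrow> 'o \<Rightarrow> ('o \<Rightarrow> 'o) \<Rightarrow> 'o set \<Rightarrow> ('o \<Rightarrow> 'o)" where
  "BB D t X beta k c w = (SOME b'. (\<forall>e\<in>below k - w. b' e < c e) \<and>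
     \<not> pos_mod D t {a\<in>Bset X beta k c w. \<forall>e\<in>below k - w. b' e < beta a e})"

definition CA :: "'o::wellorder \<Rightarrow> 'o \<Rightarrow> 'o set" where
  "CA s c = (if cof c < s then (SOME A. cofinal_in A c \<and> (card_of A, card_of (below (cof c))) \<in> ordIso) else {})"

definition Wit :: "'o::wellorder set set \<Rightarrow> 'o \<Rightarrow> 'o set \<Rightarrow> ('o \<Rightarrow> 'o \<Rightarrow> 'o) \<Rightarrow> 'o \<Rightarrow> 'o \<Rightarrow> ('o \<Rightarrow> 'o \<times> bool) \<Rightarrow> 'o set" where
  "Wit D t X beta k s e = (\<Union>x\<in>below k. insert (osup {fst (e z) | z. z < k \<and> fst (e z) < fst (e x)})
     (insert (BB D t X beta k (\<lambda>z. fst (e z)) {z\<in>below k. snd (e z)} x) (CA s (fst (e x)))))"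

context cl6 begin
unbundle cardinal_syntax

lemma osup_k:
  assumes "s \<le> cof (bs e)"
  shows "osup {bs z | z. z < k \<and> bs z < bs e} < bs e"
proof -
  have T: "{bs z | z. z < k \<and> bs z < bs e} \<subseteq> below (bs e)" by (auto simp: below_def)
  have "{bs z | z. z < k \<and> bs z < bs e} \<subseteq> bs ` below k" by (auto simp: below_def)
  hence "|{bs z | z. z < k \<and> bs z < bs e}| \<le>o |below k|"
    by (rule ordLeq_transitive[OF card_of_mono1 card_of_image])
  hence "|{bs z | z. z < k \<and> bs z < bs e}| <o |below s|" by (rule ordLeq_ordLess_trans[OF _ kls])
  thus ?thesis using osup_lt[OF sigma_reg assms T] by blast
qed

lemma CA_prop: "cof c < s \<Longrightarrow> cofinal_in (CA s c) c \<and> |CA s c| =o |below (cof c)|"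
proof -
  assume "cof c < s"
  hence "CA s c = (SOME A. cofinal_in A c \<and> |A| =o |below (cof c)| )" unfolding CA_def by simp
  thus ?thesis using someI_ex[OF cof_wit[of c]] by simp
qed

lemma CA_card: "|CA s c| <o |below s|"
proof (cases "cof c < s")
  case True
  thus ?thesis using CA_prop[OF True] ordIso_ordLess_trans SL[OF sigma_reg True] by blast
next
  case False
  hence e: "CA s c = {}" unfolding CA_def by simp
  show ?thesis unfolding e
    by (rule finite_ordLess_infinite[OF card_of_Well_order card_of_Well_order]) (simp_all add: Field_card_of s_inf)
qed

lemma Wit_card: "|Wit D t X beta k s e| <o |below s|"
  unfolding Wit_def
  by (rule RU[OF sigma_reg s_inf kls]) (auto intro!: ins_lt CA_card)

end


context cl6 begin
unbundle cardinal_syntax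

lemma infinite_case:
  assumes kinf: "infinite (below k)"
  shows "\<exists>bs w. GOOD t k s D beta X bs w"
proof -
  obtain bnd where bnd: "\<forall>a<t. \<forall>e<k. beta a e < bnd" using beta_bounded by blast
  let ?W = "Wit D t X beta k s"
  have Wc: "\<forall>e. |?W e| <o |below s|" using Wit_card by blast
  obtain l where l: "l < s" "\<exists>j. j < l" "\<forall>j<l. \<exists>j'. j < j' \<and> j' < l"
     "\<forall>A\<subseteq>below l. |A| \<le>o |below k| \<longrightarrow> (\<exists>j<l. \<forall>a\<in>A. a \<le> j)"
    using lam_exists[OF kinf] by blast
  define Gam where "Gam = {x. \<exists>i<l. Gs k bnd ?W i x}"
  have Gam_eq: "Gam = (\<Union>i\<in>below l. {x. Gs k bnd ?W i x})" unfolding Gam_def by (auto simp: below_def)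
  have "\<forall>i\<in>below l. |{x. Gs k bnd ?W i x}| <o |below s|"
  proof
    fix i assume "i \<in> below l"
    hence "i < s" using l(1) by (auto simp: below_def)
    thus "|{x. Gs k bnd ?W i x}| <o |below s|" by (rule Gs_card[OF Wc])
  qed
  hence Gc: "|Gam| <o |below s|" unfolding Gam_eq by (rule RU[OF sigma_reg s_inf SL[OF sigma_reg l(1)]])
  have bndG: "bnd \<in> Gam" using l(2) Gs.base unfolding Gam_def by blast
  have clos: "\<And>e. e \<in> Func (below k) (Gam \<times> (UNIV::bool set)) \<Longrightarrow> ?W e \<subseteq> Gam"
  proof -
    fix e assume e: "e \<in> Func (below k) (Gam \<times> (UNIV::bool set))"
    have "\<forall>x\<in>below k. \<exists>i. i < l \<and> Gs k bnd ?W i (fst (e x))"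
      using e unfolding Func_def Gam_def by (auto simp: mem_Times_iff)
    hence "\<exists>I. \<forall>x\<in>below k. I x < l \<and> Gs k bnd ?W (I x) (fst (e x))" by (rule bchoice)
    then obtain I where I: "\<forall>x\<in>below k. I x < l \<and> Gs k bnd ?W (I x) (fst (e x))" by blast
    have "I ` below k \<subseteq> below l" using I by (auto simp: below_def)
    moreover have "|I ` below k| \<le>o |below k|" by (rule card_of_image)
    ultimately obtain j where j: "j < l" "\<forall>a\<in>I ` below k. a \<le> j" using l(4) by blast
    have Gj: "\<forall>x\<in>below k. Gs k bnd ?W j (fst (e x))"
      using I j(2) Gs_mono by blast
    obtain j' where j': "j < j'" "j' < l" using l(3) j(1) by blast
    have und: "\<forall>x. x \<notin> below k \<longrightarrow> e x = undefined" using e unfolding Func_def by blast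
    show "?W e \<subseteq> Gam"
    proof
      fix y assume "y \<in> ?W e"
      hence "Gs k bnd ?W j' y" using Gs.step[OF j'(1) Gj und] by blast
      thus "y \<in> Gam" unfolding Gam_def using j'(2) by blast
    qed
  qed
  define code where "code a = (\<lambda>x. if x \<in> below k then ((LEAST g. g \<in> Gam \<and> beta a x \<le> g), beta a x \<in> Gam) else undefined)" for a
  have lst: "\<And>a x. a \<in> X \<Longrightarrow> x \<in> below k \<Longrightarrow>
     (LEAST g. g \<in> Gam \<and> beta a x \<le> g) \<in> Gam \<and> beta a x \<le> (LEAST g. g \<in> Gam \<and> beta a x \<le> g)"
  proof -
    fix a x assume a: "a \<in> X" and x: "x \<in> below k"
    have "beta a x < bnd" using bnd X_sub a x by (auto simp: below_def)
    hence "bnd \<in> Gam \<and> beta a x \<le> bnd" using bndG by simp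
    thus "(LEAST g. g \<in> Gam \<and> beta a x \<le> g) \<in> Gam \<and> beta a x \<le> (LEAST g. g \<in> Gam \<and> beta a x \<le> g)"
      by (rule LeastI[where P="\<lambda>g. g \<in> Gam \<and> beta a x \<le> g"])
  qed
  have code_in: "\<And>a. a \<in> X \<Longrightarrow> code a \<in> Func (below k) (Gam \<times> (UNIV::bool set))"
    unfolding Func_def code_def using lst by auto
  have Fc: "|Func (below k) (Gam \<times> (UNIV::bool set))| <o |below s|" by (rule Func_lt[OF Gc])
  have "\<exists>e0\<in>Func (below k) (Gam \<times> (UNIV::bool set)). pos_mod D t {a\<in>X. code a = e0}"
  proof (rule ccontr)
    assume "\<not> (\<exists>e0\<in>Func (below k) (Gam \<times> (UNIV::bool set)). pos_mod D t {a\<in>X. code a = e0})"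
    hence "\<forall>e0\<in>Func (below k) (Gam \<times> (UNIV::bool set)). \<not> pos_mod D t {a\<in>X. code a = e0}" by blast
    hence "\<not> pos_mod D t (\<Union>e0\<in>Func (below k) (Gam \<times> (UNIV::bool set)). {a\<in>X. code a = e0})" by (rule NU[OF Fc])
    moreover have "X \<subseteq> (\<Union>e0\<in>Func (below k) (Gam \<times> (UNIV::bool set)). {a\<in>X. code a = e0})" using code_in by blast
    ultimately show False using pos_mono X_pos by blast
  qed
  then obtain e0 where e0: "e0 \<in> Func (below k) (Gam \<times> (UNIV::bool set))" and pP: "pos_mod D t {a\<in>X. code a = e0}" by blast
  define P where "P = {a\<in>X. code a = e0}"
  have pP': "pos_mod D t P" using pP unfolding P_def .
  define c where "c = (\<lambda>z. fst (e0 z))"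
  define w where "w = {z\<in>below k. snd (e0 z)}"
  have wk: "w \<subseteq> below k" unfolding w_def by auto
  have We0: "?W e0 \<subseteq> Gam" by (rule clos[OF e0])
  have cP: "\<And>a x. a \<in> P \<Longrightarrow> x \<in> below k \<Longrightarrow> c x = (LEAST g. g \<in> Gam \<and> beta a x \<le> g) \<and> (x \<in> w \<longleftrightarrow> beta a x \<in> Gam)"
  proof -
    fix a x assume a: "a \<in> P" and x: "x \<in> below k"
    have "e0 x = code a x" using a unfolding P_def by simp
    thus "c x = (LEAST g. g \<in> Gam \<and> beta a x \<le> g) \<and> (x \<in> w \<longleftrightarrow> beta a x \<in> Gam)"
      unfolding c_def w_def code_def using x by simp
  qed
  have PX: "P \<subseteq> X" unfolding P_def by auto
  have cG: "\<And>a x. a \<in> P \<Longrightarrow> x \<in> below k \<Longrightarrow> c x \<in> Gam \<and> beta a x \<le> c x"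
    using cP lst PX by (metis subsetD)
  have cmin: "\<And>a x g. a \<in> P \<Longrightarrow> x \<in> below k \<Longrightarrow> g \<in> Gam \<Longrightarrow> g < c x \<Longrightarrow> g < beta a x"
  proof -
    fix a x g assume a: "a \<in> P" and x: "x \<in> below k" and g: "g \<in> Gam" "g < c x"
    have "g < (LEAST g. g \<in> Gam \<and> beta a x \<le> g)" using cP[OF a x] g(2) by simp
    hence "\<not> (g \<in> Gam \<and> beta a x \<le> g)" by (rule not_less_Least)
    thus "g < beta a x" using g(1) by (simp add: not_le)
  qed
  have pw: "\<And>a x. a \<in> P \<Longrightarrow> x \<in> w \<Longrightarrow> beta a x = c x"
  proof -
    fix a x assume a: "a \<in> P" and x: "x \<in> w"
    have xk: "x \<in> below k" using x wk by blast
    have "beta a x \<in> Gam" using cP[OF a xk] x by simp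
    hence "c x \<le> beta a x" using cP[OF a xk] by (simp add: Least_le)
    thus "beta a x = c x" using cG[OF a xk] by simp
  qed
  have pnw: "\<And>a x. a \<in> P \<Longrightarrow> x \<in> below k - w \<Longrightarrow> beta a x < c x"
  proof -
    fix a x assume a: "a \<in> P" and x: "x \<in> below k - w"
    have xk: "x \<in> below k" using x by blast
    have "beta a x \<notin> Gam" using cP[OF a xk] x by simp
    hence "beta a x \<noteq> c x" using cG[OF a xk] by auto
    thus "beta a x < c x" using cG[OF a xk] by (simp add: order.not_eq_order_implies_strict)
  qed
  obtain a0 where a0: "a0 \<in> P" using pos_nonempty[OF pP'] by blast
  have Wx: "\<And>x. x \<in> below k \<Longrightarrow> insert (osup {c z | z. z < k \<and> c z < c x})
     (insert (BB D t X beta k c w x) (CA s (c x))) \<subseteq> Gam"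
    using We0 unfolding Wit_def c_def w_def by blast
  have cof_lo: "\<forall>x\<in>below k - w. s \<le> cof (c x)"
  proof
    fix x assume x: "x \<in> below k - w"
    hence xk: "x \<in> below k" by blast
    show "s \<le> cof (c x)"
    proof (rule ccontr)
      assume "\<not> s \<le> cof (c x)" hence lt: "cof (c x) < s" by simp
      have cf: "cofinal_in (CA s (c x)) (c x)" using CA_prop[OF lt] by blast
      have "beta a0 x < c x" by (rule pnw[OF a0 x])
      then obtain g where g: "g \<in> CA s (c x)" "beta a0 x \<le> g" using cf unfolding cofinal_in_def by blast
      have gG: "g \<in> Gam" using Wx[OF xk] g(1) by blast
      have "g < c x" using cf g(1) unfolding cofinal_in_def below_def by blast
      hence "g < beta a0 x" by (rule cmin[OF a0 xk gG])
      thus False using g(2) by simp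
    qed
  qed
  have Olt: "\<And>x. x \<in> below k - w \<Longrightarrow> osup {c z | z. z < k \<and> c z < c x} < c x"
    using cof_lo osup_k by blast
  have PB: "P \<subseteq> Bset X beta k c w"
  proof
    fix a assume a: "a \<in> P"
    show "a \<in> Bset X beta k c w" unfolding Bset_def
    proof (intro CollectI conjI ballI)
      show "a \<in> X" using a PX by blast
    next
      fix x assume "x \<in> w" thus "beta a x = c x" by (rule pw[OF a])
    next
      fix x assume x: "x \<in> below k - w"
      hence xk: "x \<in> below k" by blast
      have "osup {c z | z. z < k \<and> c z < c x} \<in> Gam" using Wx[OF xk] by blast
      thus "osup {c z | z. z < k \<and> c z < c x} < beta a x" using cmin[OF a xk] Olt[OF x] by blast
      show "beta a x < c x" by (rule pnw[OF a x])
    qed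
  qed
  have pB: "pos_mod D t (Bset X beta k c w)" by (rule pos_mono[OF PB pP'])
  have cc: "\<forall>b'. (\<forall>e\<in>below k - w. b' e < c e) \<longrightarrow>
      pos_mod D t {a\<in>Bset X beta k c w. \<forall>e\<in>below k - w. b' e < beta a e}"
  proof (rule ccontr)
    assume "\<not> ?thesis"
    hence ex: "\<exists>b'. (\<forall>e\<in>below k - w. b' e < c e) \<and>
      \<not> pos_mod D t {a\<in>Bset X beta k c w. \<forall>e\<in>below k - w. b' e < beta a e}" by blast
    let ?bb = "BB D t X beta k c w"
    have bb: "(\<forall>e\<in>below k - w. ?bb e < c e) \<and>
      \<not> pos_mod D t {a\<in>Bset X beta k c w. \<forall>e\<in>below k - w. ?bb e < beta a e}"
      unfolding BB_def by (rule someI_ex[OF ex])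
    have "P \<subseteq> {a\<in>Bset X beta k c w. \<forall>e\<in>below k - w. ?bb e < beta a e}"
    proof
      fix a assume a: "a \<in> P"
      show "a \<in> {a\<in>Bset X beta k c w. \<forall>e\<in>below k - w. ?bb e < beta a e}"
      proof (intro CollectI conjI ballI)
        show "a \<in> Bset X beta k c w" using a PB by blast
      next
        fix x assume x: "x \<in> below k - w"
        hence xk: "x \<in> below k" by blast
        have "?bb x \<in> Gam" using Wx[OF xk] by blast
        thus "?bb x < beta a x" using cmin[OF a xk] bb x by blast
      qed
    qed
    hence "pos_mod D t {a\<in>Bset X beta k c w. \<forall>e\<in>below k - w. ?bb e < beta a e}" using pos_mono pP' by blast
    thus False using bb by blast
  qed
  have cof_hi: "\<forall>x\<in>below k - w. cof (c x) \<le> t"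
  proof
    fix x assume x: "x \<in> below k - w"
    let ?B = "Bset X beta k c w \<inter> below t"
    let ?A = "(\<lambda>a. beta a x) ` ?B"
    have cof: "cofinal_in ?A (c x)" unfolding cofinal_in_def
    proof (intro conjI allI impI)
      show "?A \<subseteq> below (c x)" using x unfolding Bset_def below_def by auto
    next
      fix y assume y: "y < c x"
      define b'' where "b'' = (\<lambda>z. if z = x then y else osup {c zz | zz. zz < k \<and> c zz < c z})"
      have "\<forall>e\<in>below k - w. b'' e < c e" unfolding b''_def using y Olt by auto
      hence "pos_mod D t {a\<in>Bset X beta k c w. \<forall>e\<in>below k - w. b'' e < beta a e}" using cc by blast
      then obtain a where a: "a \<in> {a\<in>Bset X beta k c w. \<forall>e\<in>below k - w. b'' e < beta a e}" "a < t"
        using pos_nonempty by blast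
      have "b'' x < beta a x" using a(1) x by blast
      hence "y < beta a x" unfolding b''_def by simp
      moreover have "a \<in> ?B" using a by (auto simp: below_def)
      ultimately show "\<exists>g\<in>?A. y \<le> g" by (auto intro: less_imp_le)
    qed
    have "|?A| \<le>o |below t|"
      by (rule ordLeq_transitive[OF card_of_image card_of_mono1]) auto
    then obtain y0 where y0: "y0 \<le> t" "|?A| =o |below y0|" using L_ot2 by blast
    have "cof (c x) \<le> y0" by (rule cof_le[OF cof y0(2)])
    thus "cof (c x) \<le> t" using y0(1) by simp
  qed
  have "GOOD t k s D beta X c w"
    unfolding GOOD_def Let_def Bset_def[symmetric]
    using wk cof_lo cof_hi pB cc by blast
  thus ?thesis by blast
qed

lemma main: "\<exists>bs w. GOOD t k s D beta X bs w"
  using finite_case infinite_case by blast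

end

theorem claim6p1:
  fixes t k s :: "'o::wellorder"
    and D :: "'o set set"
    and beta :: "'o \<Rightarrow> 'o \<Rightarrow> 'o"
    and X :: "'o set"
  assumes theta_reg: "cof t = t"
    and kappa_card: "is_cardinal k"
    and sigma_reg: "cof s = s"
    and sigma_gt: "(cardSuc (card_of (below k)), card_of (below s)) \<in> ordLess"
    and sigma_pow: "\<forall>a<s. (BNF_Cardinal_Arithmetic.cexp (card_of (below a)) (card_of (below k)), card_of (below s)) \<in> ordLess"
    and D_filter: "complete_filter D t s"
    and D_tails: "\<forall>a<t. below t - below a \<in> D"
    and beta_bounded: "\<exists>b. \<forall>a<t. \<forall>e<k. beta a e < b"
    and X_sub: "X \<subseteq> below t"
    and X_pos: "pos_mod D t X"
  shows "\<exists>bs :: 'o \<Rightarrow> 'o. \<exists>w. w \<subseteq> below k \<and>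
           (\<forall>e\<in>below k - w. s \<le> cof (bs e) \<and> cof (bs e) \<le> t) \<and>
           (let B = {a\<in>X. (\<forall>e\<in>w. beta a e = bs e) \<and>
                       (\<forall>e\<in>below k - w.
                          osup {bs z | z. z < k \<and> bs z < bs e} < beta a e \<and> beta a e < bs e)}
            in pos_mod D t B \<and>
               (\<forall>b' :: 'o \<Rightarrow> 'o. (\<forall>e\<in>below k - w. b' e < bs e) \<longrightarrow>
                  pos_mod D t {a\<in>B. \<forall>e\<in>below k - w. b' e < beta a e}))"
  proof -
  have "cl6 t k s D beta X" unfolding cl6_def
    using theta_reg kappa_card sigma_reg sigma_gt sigma_pow D_filter D_tails beta_bounded X_sub X_pos
    by blast
  then obtain bs w where "GOOD t k s D beta X bs w" using cl6.main by blast
  thus ?thesis unfolding GOOD_def by blast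
qed

end
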